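(* Let $n\ge 1$ and let \[ f(x):=P(x)+iQ(x),\qquad P(x):=x^n+a_1x^{n-1}+a_2x^{n-2}+\cdots+a_n,\qquad Q(x):=b_1x^{n-1}+b_2x^{n-2}+\cdots+b_n, \] where all $a_i$ and $b_i$ are real. Suppose $f$ has (counting multiplicities) $n_+$ roots with positive imaginary part, $n_-$ roots with negative imaginary part and $n_0<n$ real roots, so $n_++n_-+n_0=n$. Let $d:=n-2\min\{n_+,n_-\}$. Then, counting multiplicities, there exist at least $d$ real roots $\mu_1,\mu_2,\ldots,\mu_d$ of $P$ and at least $d-1$ real roots $\nu_1,\nu_2,\ldots,\nu_{d-1}$ of $Q$ such that \[ \mu_1\le\nu_1\le\mu_2\le\nu_2\le\cdots\le\nu_{d-1}\le\mu_d . \] If $n_0=0$, then these inequalities may be taken to be strict.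
   Context: "Counting multiplicities" means that a root of multiplicity $m$ may appear up to $m$ times in the respective list. *)

theory Defs
  imports Complex_Main "HOL-Computational_Algebra.Polynomial"
begin

definition roots_in :: "complex poly \<Rightarrow> complex set \<Rightarrow> nat" where
  "roots_in f S = (\<Sum>z\<in>{z. poly f z = 0 \<and> z \<in> S}. order z f)"

end

theory Submission
  imports Defs "HOL-Library.Multiset" "HOL-Analysis.Analysis" "HOL-Real_Asymp.Real_Asymp"
    "HOL-Computational_Algebra.Fundamental_Theorem_Algebra"
begin

definition cntle :: "real multiset \<Rightarrow> real \<Rightarrow> nat" where
  "cntle M t = size (filter_mset (\<lambda>x. x \<le> t) M)"

lemma cntle_list: "cntle (mset xs) t = card {i. i < length xs \<and> xs ! i \<le> t}"
  unfolding cntle_def by (simp flip: mset_filter add: length_filter_conv_card)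

lemma cntle_le_size: "cntle M t \<le> size M"
  unfolding cntle_def by (rule size_filter_mset_lesseq)

lemma cntle_add: "cntle (M + N) t = cntle M t + cntle N t"
  unfolding cntle_def by simp

lemma cntle_single: "cntle {#r#} t = (if r \<le> t then 1 else 0)"
  unfolding cntle_def by simp

lemma cnt_sorted:
  assumes "sorted xs" "j < length xs"
  shows "xs ! j \<le> t \<longleftrightarrow> j < cntle (mset xs) t"
proof
  assume h: "xs ! j \<le> t"
  have "{..j} \<subseteq> {i. i < length xs \<and> xs ! i \<le> t}"
    using assms h by (auto intro: order_trans[OF sorted_nth_mono[OF assms(1)]])
  then have "card {..j} \<le> card {i. i < length xs \<and> xs ! i \<le> t}"
    by (intro card_mono) auto
  then show "j < cntle (mset xs) t" by (simp add: cntle_list)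
next
  assume h: "j < cntle (mset xs) t"
  show "xs ! j \<le> t"
  proof (rule ccontr)
    assume "\<not> xs ! j \<le> t"
    then have "{i. i < length xs \<and> xs ! i \<le> t} \<subseteq> {..<j}"
      using assms sorted_nth_mono[OF assms(1)] by (auto simp: not_le) (meson le_less_trans not_le)
    then have "card {i. i < length xs \<and> xs ! i \<le> t} \<le> card {..<j}"
      by (intro card_mono) auto
    then show False using h by (simp add: cntle_list)
  qed
qed

lemma C_to_interlace:
  assumes a: "sorted a" and b: "sorted b"
    and C: "\<And>t. cntle (mset b) t \<le> cntle (mset a) t \<and> cntle (mset a) t \<le> cntle (mset b) t + 1"
    and la: "d \<le> length a" and lb: "d - 1 \<le> length b" and i: "i < d - 1"
  shows "a ! i \<le> b ! i \<and> b ! i \<le> a ! Suc i"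
proof
  have ib: "i < length b" using lb i by simp
  have ia: "Suc i < length a" using la i by simp
  have "i < cntle (mset b) (b ! i)" using cnt_sorted[OF b ib, of "b ! i"] by simp
  then have "i < cntle (mset a) (b ! i)" using C[of "b ! i"] by linarith
  then show "a ! i \<le> b ! i" using cnt_sorted[OF a] ia by simp
  have "Suc i < cntle (mset a) (a ! Suc i)" using cnt_sorted[OF a ia, of "a ! Suc i"] by simp
  then have "i < cntle (mset b) (a ! Suc i)" using C[of "a ! Suc i"] by linarith
  then show "b ! i \<le> a ! Suc i" using cnt_sorted[OF b ib] by simp
qed

lemma interlace_to_C:
  assumes a: "sorted a" and b: "sorted b" and l: "length b + 1 = length a"
    and I: "\<And>i. i < length b \<Longrightarrow> a ! i \<le> b ! i \<and> b ! i \<le> a ! Suc i"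
  shows "cntle (mset b) t \<le> cntle (mset a) t \<and> cntle (mset a) t \<le> cntle (mset b) t + 1"
proof
  define c where "c = cntle (mset b) t"
  show "c \<le> cntle (mset a) t"
  proof (cases c)
    case (Suc k)
    have "c \<le> length b" using cntle_le_size[of "mset b" t] by (simp add: c_def)
    then have kb: "k < length b" using Suc by simp
    have "b ! k \<le> t" using cnt_sorted[OF b kb] Suc c_def by simp
    then have "a ! k \<le> t" using I[OF kb] by linarith
    then have "k < cntle (mset a) t" using cnt_sorted[OF a] kb l by simp
    then show ?thesis using Suc by simp
  qed simp
  define c' where "c' = cntle (mset a) t"
  show "c' \<le> c + 1"
  proof (cases "c' \<le> 1")
    case False
    define k where "k = c' - 2"
    have k: "c' = Suc (Suc k)" using False by (simp add: k_def)
    have "c' \<le> length a" using cntle_le_size[of "mset a" t] by (simp add: c'_def)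
    then have ka: "Suc k < length a" and kb: "k < length b" using k l by auto
    have "a ! Suc k \<le> t" using cnt_sorted[OF a ka] k c'_def by simp
    then have "b ! k \<le> t" using I[OF kb] by linarith
    then have "k < c" using cnt_sorted[OF b kb] c_def by simp
    then show ?thesis using k by simp
  qed simp
qed

lemma distinct_roots_dvd:
  fixes p :: "'a::idom poly" and k :: nat
  assumes "\<And>i. i < k \<Longrightarrow> poly p (y i) = 0" "inj_on y {..<k}"
  shows "(\<Prod>i<k. [:- y i, 1:]) dvd p"
  using assms
proof (induction k)
  case 0 then show ?case by simp
next
  case (Suc k)
  have "inj_on y {..<k}" using Suc.prems(2) by (rule inj_on_subset) auto
  then have "(\<Prod>i<k. [:- y i, 1:]) dvd p" using Suc.IH Suc.prems(1) by simp
  then obtain r where r: "p = (\<Prod>i<k. [:- y i, 1:]) * r" by (auto elim: dvdE)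
  have ne: "y k \<noteq> y i" if "i < k" for i
    using Suc.prems(2) that by (force simp: inj_on_def)
  have "poly (\<Prod>i<k. [:- y i, 1:]) (y k) \<noteq> 0"
    using ne by (simp add: poly_prod)
  moreover have "poly p (y k) = 0" using Suc by simp
  ultimately have "poly r (y k) = 0" using r by simp
  then have "[:- y k, 1:] dvd r" by (simp add: poly_eq_0_iff_dvd)
  then have "(\<Prod>i<k. [:- y i, 1:]) * [:- y k, 1:] dvd (\<Prod>i<k. [:- y i, 1:]) * r"
    by (rule mult_dvd_mono[OF dvd_refl])
  then show ?case using r by (simp only: prod.lessThan_Suc)
qed

lemma ivt_seq:
  fixes th :: "real \<Rightarrow> real" and d :: nat
  assumes cont: "continuous_on UNIV th"
    and bot: "(th \<longlongrightarrow> - pi * d) at_bot" and top: "(th \<longlongrightarrow> 0) at_top"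
  shows "\<exists>x. (\<forall>j. Suc j < 2*d - 1 \<longrightarrow> x j < x (Suc j)) \<and>
             (\<forall>j < 2*d - 1. th (x j) = - pi * d + pi * (real j + 1) / 2)"
proof -
  define c where "c j = - pi * d + pi * (real j + 1) / 2" for j :: nat
  have c_lo: "c 0 \<le> c j" for j unfolding c_def by (simp add: divide_right_mono)
  have c_hi: "c j \<le> - pi / 2" if "j < 2*d - 1" for j
  proof -
    have "real j + 1 \<le> 2 * real d - 1" using that by linarith
    then have "pi * (real j + 1) \<le> pi * (2 * real d - 1)" by (simp add: mult_left_mono)
    then show ?thesis unfolding c_def by (simp add: field_simps)
  qed
  have c_mono: "c j < c (Suc j)" for j unfolding c_def by (simp add: field_simps)
  have "- pi * d < c 0" unfolding c_def by simp
  from order_tendstoD(2)[OF bot this] obtain a where a: "\<And>y. y \<le> a \<Longrightarrow> th y < c 0"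
    by (auto simp: eventually_at_bot_linorder)
  have "- pi / 2 < (0::real)" by simp
  from order_tendstoD(1)[OF top this] obtain M where M: "\<And>y. y \<ge> M \<Longrightarrow> th y > - pi / 2"
    by (auto simp: eventually_at_top_linorder)
  define b where "b = max a M"
  have ab: "a \<le> b" by (simp add: b_def)
  have thb: "th b > - pi / 2" using M by (simp add: b_def)
  define S where "S j = {a..b} \<inter> {y. th y \<le> c j}" for j
  define x where "x j = Sup (S j)" for j
  have xS: "x j \<in> S j" if "j < 2*d - 1" for j
  proof -
    have "a \<in> S j" using a[of a] c_lo[of j] ab by (auto simp: S_def)
    moreover have "bdd_above (S j)" by (auto simp: S_def bdd_above_def)
    moreover have "closed (S j)" unfolding S_def
      by (intro closed_Int closed_atLeastAtMost closed_Collect_le cont continuous_on_const)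
    ultimately show ?thesis unfolding x_def by (intro closed_contains_Sup) auto
  qed
  have thx: "th (x j) = c j" if j: "j < 2*d - 1" for j
  proof -
    have "th (x j) \<le> c j" "x j \<le> b" "a \<le> x j" using xS[OF j] by (auto simp: S_def)
    moreover have "c j \<le> th b" using c_hi[OF j] thb by linarith
    ultimately obtain y where y: "x j \<le> y" "y \<le> b" "th y = c j"
      using IVT'[of th "x j" "c j" b] continuous_on_subset[OF cont] by auto
    then have "y \<in> S j" using \<open>a \<le> x j\<close> by (auto simp: S_def)
    then have "y \<le> x j" unfolding x_def by (intro cSup_upper) (auto simp: S_def bdd_above_def)
    then show ?thesis using y by simp
  qed
  have "x j < x (Suc j)" if j: "Suc j < 2*d - 1" for j
  proof -
    have j': "j < 2*d - 1" using j by simp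
    have "x j \<in> S (Suc j)" using xS[OF j'] thx[OF j'] c_mono[of j] by (auto simp: S_def)
    then have "x j \<le> x (Suc j)" unfolding x_def by (intro cSup_upper) (auto simp: S_def bdd_above_def)
    moreover have "x j \<noteq> x (Suc j)" using thx[OF j'] thx[OF j] c_mono[of j] by auto
    ultimately show ?thesis by simp
  qed
  then show ?thesis using thx unfolding c_def by blast
qed

definition garg :: "complex \<Rightarrow> real \<Rightarrow> real" where
  "garg z x = (if 0 < Im z then - pi / 2 else pi / 2) + arctan ((x - Re z) / Im z)"

lemma garg_polar:
  assumes "Im z \<noteq> 0"
  shows "of_real x - z = of_real (cmod (of_real x - z)) * cis (garg z x)"
proof -
  define u where "u = x - Re z"
  define b where "b = Im z"
  have b: "b \<noteq> 0" using assms by (simp add: b_def)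
  have cm: "cmod (of_real x - z) = sqrt (u^2 + b^2)"
    by (simp add: cmod_def u_def b_def power2_eq_square)
  have sq: "sqrt (1 + (u / b)^2) = sqrt (u^2 + b^2) / \<bar>b\<bar>"
  proof -
    have "1 + (u/b)^2 = (u^2 + b^2) / b^2" using b by (simp add: field_simps)
    then show ?thesis by (simp add: real_sqrt_divide)
  qed
  have pos: "sqrt (u^2 + b^2) > 0" using b by (simp add: add_nonneg_pos)
  define s where "s = sqrt (u^2 + b^2)"
  have ca: "cos (arctan (u/b)) = \<bar>b\<bar> / s"
    using pos b by (simp add: cos_arctan sq s_def)
  have sa: "sin (arctan (u/b)) = (u / b) * (\<bar>b\<bar> / s)"
    using pos b by (simp add: sin_arctan sq s_def)
  have spos: "s > 0" using pos by (simp add: s_def)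
  have "cos (garg z x) = u / s \<and> sin (garg z x) = - b / s"
  proof (cases "0 < b")
    case True
    have "garg z x = arctan (u / b) - pi / 2" using True by (simp add: garg_def u_def b_def)
    then show ?thesis using True ca sa by (simp add: cos_diff sin_diff)
  next
    case False
    then have bn: "b < 0" using b by simp
    have "garg z x = pi / 2 + arctan (u / b)" using False by (simp add: garg_def u_def b_def)
    then show ?thesis using bn ca sa b by (simp add: cos_add sin_add)
  qed
  then have "s * cos (garg z x) = u" "s * sin (garg z x) = - b" using spos by auto
  then show ?thesis
    by (simp add: complex_eq_iff cm flip: s_def) (simp add: u_def b_def)
qed

lemma prod_polar:
  assumes "\<forall>z\<in>#M. Im z \<noteq> 0"
  shows "poly (\<Prod>z\<in>#M. [:-z, 1:]) (of_real x) =
           of_real (\<Prod>z\<in>#M. cmod (of_real x - z)) * cis (\<Sum>z\<in>#M. garg z x)"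
  using assms
proof (induction M)
  case empty then show ?case by simp
next
  case (add a M)
  have "of_real x - a = of_real (cmod (of_real x - a)) * cis (garg a x)"
    using add.prems by (intro garg_polar) simp
  moreover have "poly (\<Prod>z\<in>#add_mset a M. [:-z, 1:]) (of_real x) =
      (of_real x - a) * poly (\<Prod>z\<in>#M. [:-z, 1:]) (of_real x)" by (simp add: algebra_simps)
  ultimately show ?case using add by (simp add: cis_mult[symmetric] mult_ac)
qed

lemma garg_lims:
  assumes "Im z \<noteq> 0"
  shows "continuous_on UNIV (garg z)" "(garg z \<longlongrightarrow> 0) at_top"
    "(garg z \<longlongrightarrow> (if Im z < 0 then pi else - pi)) at_bot"
proof -
  show "continuous_on UNIV (garg z)" unfolding garg_def using assms by (intro continuous_intros) auto
  show "(garg z \<longlongrightarrow> 0) at_top"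
  proof (cases "Im z > 0")
    case True
    have "((\<lambda>x. arctan((x - Re z)/Im z)) \<longlongrightarrow> pi/2) at_top" using True by real_asymp
    then have "((\<lambda>x. - pi/2 + arctan((x - Re z)/Im z)) \<longlongrightarrow> - pi/2 + pi/2) at_top"
      by (intro tendsto_add tendsto_const)
    then show ?thesis using True unfolding garg_def by simp
  next
    case False
    then have "Im z < 0" using assms by simp
    then have "((\<lambda>x. arctan((x - Re z)/Im z)) \<longlongrightarrow> - pi/2) at_top" by real_asymp
    then have "((\<lambda>x. pi/2 + arctan((x - Re z)/Im z)) \<longlongrightarrow> pi/2 + - pi/2) at_top"
      by (intro tendsto_add tendsto_const)
    then show ?thesis using False unfolding garg_def by simp
  qed
  show "(garg z \<longlongrightarrow> (if Im z < 0 then pi else - pi)) at_bot"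
  proof (cases "Im z > 0")
    case True
    have "((\<lambda>x. arctan((x - Re z)/Im z)) \<longlongrightarrow> - pi/2) at_bot" using True by real_asymp
    then have "((\<lambda>x. - pi/2 + arctan((x - Re z)/Im z)) \<longlongrightarrow> - pi/2 + - pi/2) at_bot"
      by (intro tendsto_add tendsto_const)
    then show ?thesis using True unfolding garg_def by simp
  next
    case False
    then have "Im z < 0" using assms by simp
    then have "((\<lambda>x. arctan((x - Re z)/Im z)) \<longlongrightarrow> pi/2) at_bot" by real_asymp
    then have "((\<lambda>x. pi/2 + arctan((x - Re z)/Im z)) \<longlongrightarrow> pi/2 + pi/2) at_bot"
      by (intro tendsto_add tendsto_const)
    then show ?thesis using False \<open>Im z < 0\<close> unfolding garg_def by simp
  qed
qed

lemma sum_garg_lims: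
  assumes "\<forall>z\<in>#M. Im z \<noteq> 0"
  shows "continuous_on UNIV (\<lambda>x. \<Sum>z\<in>#M. garg z x) \<and> ((\<lambda>x. \<Sum>z\<in>#M. garg z x) \<longlongrightarrow> 0) at_top \<and>
    ((\<lambda>x. \<Sum>z\<in>#M. garg z x) \<longlongrightarrow> pi * (real (size (filter_mset (\<lambda>z. Im z < 0) M))
        - real (size (filter_mset (\<lambda>z. Im z > 0) M)))) at_bot"
  using assms
proof (induction M)
  case empty then show ?case by simp
next
  case (add a M)
  then have a: "Im a \<noteq> 0" and IH: "continuous_on UNIV (\<lambda>x. \<Sum>z\<in>#M. garg z x)"
    "((\<lambda>x. \<Sum>z\<in>#M. garg z x) \<longlongrightarrow> 0) at_top"
    "((\<lambda>x. \<Sum>z\<in>#M. garg z x) \<longlongrightarrow> pi * (real (size (filter_mset (\<lambda>z. Im z < 0) M))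
        - real (size (filter_mset (\<lambda>z. Im z > 0) M)))) at_bot" by auto
  note g = garg_lims[OF a]
  have c: "continuous_on UNIV (\<lambda>x. garg a x + (\<Sum>z\<in>#M. garg z x))"
    using g(1) IH(1) by (intro continuous_on_add) (auto simp: o_def)
  have t: "((\<lambda>x. garg a x + (\<Sum>z\<in>#M. garg z x)) \<longlongrightarrow> 0 + 0) at_top"
    using g(2) IH(2) by (intro tendsto_add) auto
  have b: "((\<lambda>x. garg a x + (\<Sum>z\<in>#M. garg z x)) \<longlongrightarrow> (if Im a < 0 then pi else - pi) +
     pi * (real (size (filter_mset (\<lambda>z. Im z < 0) M)) - real (size (filter_mset (\<lambda>z. Im z > 0) M)))) at_bot"
    using g(3) IH(3) by (intro tendsto_add) auto
  have e: "(if Im a < 0 then pi else - pi) +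
     pi * (real (size (filter_mset (\<lambda>z. Im z < 0) M)) - real (size (filter_mset (\<lambda>z. Im z > 0) M)))
     = pi * (real (size (filter_mset (\<lambda>z. Im z < 0) (add_mset a M)))
        - real (size (filter_mset (\<lambda>z. Im z > 0) (add_mset a M))))"
    using a by (auto simp: algebra_simps)
  show ?case using c t b unfolding e by simp
qed

lemma roots_in_size:
  assumes "f \<noteq> 0"
  shows "roots_in f S = size (filter_mset (\<lambda>z. z \<in> S) (proots f))"
proof -
  let ?N = "filter_mset (\<lambda>z. z \<in> S) (proots f)"
  have "size ?N = sum (count ?N) (set_mset ?N)" by (rule size_multiset_overloaded_eq)
  also have "set_mset ?N = {z. poly f z = 0 \<and> z \<in> S}" using assms by auto
  also have "sum (count ?N) {z. poly f z = 0 \<and> z \<in> S} = sum (\<lambda>z. order z f) {z. poly f z = 0 \<and> z \<in> S}"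
    using assms by (intro sum.cong) auto
  finally show ?thesis by (simp add: roots_in_def)
qed

lemma poly_map_of_real: "poly (map_poly of_real p) (of_real x) = (of_real (poly p x) :: 'a::{real_algebra_1,comm_ring_1})"
  by (induction p) (auto simp: map_poly_pCons)

lemma cos_half_int: "cos (- pi * real d + pi * (real (2*i) + 1) / 2) = 0"
proof -
  have "- pi * real d + pi * (real (2*i) + 1) / 2 = of_int (2*(int i - int d)+1) * (pi/2)"
    by (simp add: field_simps)
  then show ?thesis by (subst cos_zero_iff_int) (auto intro!: exI[of _ "2*(int i - int d)+1"])
qed

lemma sin_int: "sin (- pi * real d + pi * (real (2*i+1) + 1) / 2) = 0"
proof -
  have "- pi * real d + pi * (real (2*i+1) + 1) / 2 = of_int (int i + 1 - int d) * pi"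
    by (simp add: field_simps)
  then show ?thesis by (subst sin_zero_iff_int2) blast
qed

lemma core:
  fixes P Q :: "real poly" and n :: nat
  assumes P: "degree P = n" "lead_coeff P = 1" and Q: "degree Q < n \<or> Q = 0"
  defines "f \<equiv> map_poly complex_of_real P + smult \<i> (map_poly complex_of_real Q)"
  defines "np \<equiv> roots_in f {z. Im z > 0}"
    and "nm \<equiv> roots_in f {z. Im z < 0}"
  assumes nr: "\<And>x::real. poly f (of_real x) \<noteq> 0"
  defines "d \<equiv> n - 2 * min np nm"
  shows "\<exists>x. (\<forall>j. Suc j < 2*d - 1 \<longrightarrow> x j < x (Suc j)) \<and> (\<forall>i<d. poly P (x (2*i)) = 0)
             \<and> (\<forall>i<d-1. poly Q (x (2*i+1)) = 0)"
proof -
  have cf: "coeff f k = of_real (coeff P k) + \<i> * of_real (coeff Q k)" for k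
    by (simp add: f_def coeff_map_poly)
  have Qk: "coeff Q k = 0" if "k \<ge> n" for k
    using Q that by (auto intro: coeff_eq_0)
  have fn: "coeff f n = 1" using cf[of n] Qk[of n] P by simp
  have "degree f = n"
  proof (rule antisym)
    show "degree f \<le> n" by (rule degree_le) (auto simp: cf Qk coeff_eq_0 P)
    show "n \<le> degree f" by (rule le_degree) (simp add: fn)
  qed
  then have deg: "degree f = n" and lc: "lead_coeff f = 1" and fnz: "f \<noteq> 0" using fn by auto
  define M where "M = proots f"
  have fM: "f = (\<Prod>z\<in>#M. [:-z, 1:])"
    using complex_poly_decompose_multiset[of f] lc by (simp add: M_def)
  have sM: "size M = n" using size_proots_complex[of f] deg by (simp add: M_def)
  have nz: "\<forall>z\<in>#M. Im z \<noteq> 0"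
  proof
    fix z assume "z \<in># M"
    then have "poly f z = 0" using fnz by (simp add: M_def)
    show "Im z \<noteq> 0"
    proof
      assume "Im z = 0"
      then have "z = of_real (Re z)" by (simp add: complex_eq_iff)
      then show False using \<open>poly f z = 0\<close> nr[of "Re z"] by simp
    qed
  qed
  have np': "np = size (filter_mset (\<lambda>z. Im z > 0) M)"
    unfolding np_def using roots_in_size[OF fnz] by (simp add: M_def)
  have nm': "nm = size (filter_mset (\<lambda>z. Im z < 0) M)"
    unfolding nm_def using roots_in_size[OF fnz] by (simp add: M_def)
  have "filter_mset (\<lambda>z. \<not> Im z > 0) M = filter_mset (\<lambda>z. Im z < 0) M"
    using nz by (intro filter_mset_cong) auto
  moreover have "size M = size (filter_mset (\<lambda>z. Im z > 0) M) + size (filter_mset (\<lambda>z. \<not> Im z > 0) M)"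
    using arg_cong[OF multiset_partition[of M "\<lambda>z. Im z > 0"], of size] by (simp only: size_union)
  ultimately have sum: "np + nm = n"
    using sM np' nm' by simp
  define th where "th = (\<lambda>x. \<Sum>z\<in>#M. garg z x)"
  define rho where "rho x = (\<Prod>z\<in>#M. cmod (of_real x - z))" for x
  have pf: "poly f (of_real x) = of_real (rho x) * cis (th x)" for x
    unfolding fM rho_def th_def by (rule prod_polar[OF nz])
  have pf2: "poly f (of_real x) = of_real (poly P x) + \<i> * of_real (poly Q x)" for x
    by (simp add: f_def poly_map_of_real)
  have PQ: "poly P x = rho x * cos (th x)" "poly Q x = rho x * sin (th x)" for x
    using arg_cong[OF trans[OF pf2[symmetric] pf[of x]], of Re]
      arg_cong[OF trans[OF pf2[symmetric] pf[of x]], of Im] by simp_all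
  have cont: "continuous_on UNIV th" unfolding th_def by (rule conjunct1[OF sum_garg_lims[OF nz]])
  have top: "(th \<longlongrightarrow> 0) at_top" unfolding th_def
    by (rule conjunct1[OF conjunct2[OF sum_garg_lims[OF nz]]])
  have bot: "(th \<longlongrightarrow> pi * (real nm - real np)) at_bot" unfolding th_def np' nm'
    by (rule conjunct2[OF conjunct2[OF sum_garg_lims[OF nz]]])
  show ?thesis
  proof (cases "nm \<le> np")
    case True
    have dd: "d = np - nm" using True sum by (simp add: d_def)
    have "pi * (real nm - real np) = - pi * real d" using True by (simp add: dd of_nat_diff algebra_simps)
    then obtain x where x: "\<forall>j. Suc j < 2*d - 1 \<longrightarrow> x j < x (Suc j)"
      "\<forall>j < 2*d - 1. th (x j) = - pi * d + pi * (real j + 1) / 2"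
      using ivt_seq[OF cont _ top, of d] bot by auto
    have A: "poly P (x (2*i)) = 0" if "i < d" for i
      using x(2)[rule_format, of "2*i"] that PQ(1) cos_half_int[of d i] by simp
    have B: "poly Q (x (2*i+1)) = 0" if "i < d - 1" for i
      using x(2)[rule_format, of "2*i+1"] that PQ(2) sin_int[of d i] by simp
    have B': "poly Q (x (Suc (2*i))) = 0" if "i < d - 1" for i using B[OF that] by simp
    show ?thesis
      by (rule exI[of _ x], intro conjI allI impI) (simp_all add: A B' x(1))
  next
    case False
    have dd: "d = nm - np" using False sum by (simp add: d_def)
    have cont': "continuous_on UNIV (\<lambda>x. - th x)" using cont by (intro continuous_intros)
    have top': "((\<lambda>x. - th x) \<longlongrightarrow> 0) at_top" using tendsto_minus[OF top] by simp
    have "- (pi * (real nm - real np)) = - pi * real d" using False by (simp add: dd of_nat_diff algebra_simps)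
    then have bot': "((\<lambda>x. - th x) \<longlongrightarrow> - pi * real d) at_bot" using tendsto_minus[OF bot] by simp
    obtain x where x: "\<forall>j. Suc j < 2*d - 1 \<longrightarrow> x j < x (Suc j)"
      "\<forall>j < 2*d - 1. - th (x j) = - pi * d + pi * (real j + 1) / 2"
      using ivt_seq[OF cont' bot' top'] by auto
    have A: "poly P (x (2*i)) = 0" if "i < d" for i
    proof -
      have j: "2*i < 2*d - 1" using that by simp
      have e: "- th (x (2*i)) = - pi * d + pi * (real (2*i) + 1) / 2"
        using x(2)[rule_format, OF j] .
      have "cos (- th (x (2*i))) = 0" using cos_half_int[of d i] unfolding e[symmetric] .
      then have "cos (th (x (2*i))) = 0" by (simp only: cos_minus)
      then show ?thesis using PQ(1) by simp
    qed
    have B: "poly Q (x (2*i+1)) = 0" if "i < d - 1" for i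
    proof -
      have j: "2*i+1 < 2*d - 1" using that by simp
      have e: "- th (x (2*i+1)) = - pi * d + pi * (real (2*i+1) + 1) / 2"
        using x(2)[rule_format, OF j] .
      have "sin (- th (x (2*i+1))) = 0" using sin_int[of d i] unfolding e[symmetric] .
      then have "sin (th (x (2*i+1))) = 0" by (simp only: sin_minus neg_equal_0_iff_equal)
      then show ?thesis using PQ(2) by simp
    qed
    have B': "poly Q (x (Suc (2*i))) = 0" if "i < d - 1" for i using B[OF that] by simp
    show ?thesis
      by (rule exI[of _ x], intro conjI allI impI) (simp_all add: A B' x(1))
  qed
qed

definition cpoly :: "real poly \<Rightarrow> real poly \<Rightarrow> complex poly" where
  "cpoly P Q = map_poly complex_of_real P + smult \<i> (map_poly complex_of_real Q)"

lemma map_of_real_mult: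
  "map_poly complex_of_real (p * q) = map_poly complex_of_real p * map_poly complex_of_real q"
  by (rule poly_eqI) (simp add: coeff_map_poly coeff_mult of_real_sum)

lemma poly_cpoly: "poly (cpoly P Q) (of_real x) = of_real (poly P x) + \<i> * of_real (poly Q x)"
  by (simp add: cpoly_def poly_map_of_real)

lemma cpoly_nz:
  assumes "degree P = n" "lead_coeff P = 1" "degree Q < n \<or> Q = 0"
  shows "cpoly P Q \<noteq> 0"
proof -
  have "coeff Q n = 0" using assms by (auto intro: coeff_eq_0)
  then have "coeff (cpoly P Q) n = 1" using assms by (simp add: cpoly_def coeff_map_poly)
  then show ?thesis by auto
qed

lemma no_real_root:
  assumes "cpoly P Q \<noteq> 0" "roots_in (cpoly P Q) {z. Im z = 0} = 0"
  shows "poly (cpoly P Q) (of_real x) \<noteq> 0"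
proof
  assume h: "poly (cpoly P Q) (of_real x) = 0"
  have "of_real x \<in># filter_mset (\<lambda>z. z \<in> {z. Im z = 0}) (proots (cpoly P Q))"
    using h assms(1) by simp
  then show False using assms roots_in_size[OF assms(1)] by (metis empty_iff set_mset_empty size_eq_0_iff_empty)
qed

lemma strict_chain:
  assumes "\<forall>j. Suc j < N \<longrightarrow> (x::nat \<Rightarrow> real) j < x (Suc j)" "i < j" "j < N"
  shows "x i < x j"
  using assms(2,3)
proof (induction j)
  case 0 then show ?case by simp
next
  case (Suc j)
  have "x j < x (Suc j)" using assms(1) Suc.prems by simp
  show ?case
  proof (cases "i < j")
    case True
    then have "x i < x j" using Suc by simp
    then show ?thesis using \<open>x j < x (Suc j)\<close> by simp
  next
    case False
    then have "i = j" using Suc.prems by simp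
    then show ?thesis using \<open>x j < x (Suc j)\<close> by simp
  qed
qed

lemma prod_lin_map_upt:
  "prod_mset (image_mset (\<lambda>r. [:-r, 1:]) (mset (map y [0..<k]))) = (\<Prod>i<k. [:-(y i :: real), 1:])"
proof -
  have "prod_mset (image_mset (\<lambda>r. [:-r, 1:]) (mset (map y [0..<k]))) = prod_list (map (\<lambda>i. [:- y i, 1:]) [0..<k])"
    by (simp add: prod_mset_prod_list o_def flip: mset_map)
  also have "\<dots> = (\<Prod>i\<in>set [0..<k]. [:- y i, 1:])"
    by (subst prod.distinct_set_conv_list) auto
  finally show ?thesis by (simp add: atLeast0LessThan)
qed

lemma general:
  "\<forall>P Q n. degree P = n \<longrightarrow> lead_coeff P = 1 \<longrightarrow> (degree Q < n \<or> Q = 0) \<longrightarrow>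
     roots_in (cpoly P Q) {z. Im z = 0} = k \<longrightarrow>
     (\<exists>A B. prod_mset (image_mset (\<lambda>r. [:-r, 1:]) A) dvd P \<and> prod_mset (image_mset (\<lambda>r. [:-r, 1:]) B) dvd Q \<and>
        n - 2 * min (roots_in (cpoly P Q) {z. Im z > 0}) (roots_in (cpoly P Q) {z. Im z < 0}) \<le> size A \<and>
        n - 2 * min (roots_in (cpoly P Q) {z. Im z > 0}) (roots_in (cpoly P Q) {z. Im z < 0}) - 1 \<le> size B \<and>
        (\<forall>t. cntle B t \<le> cntle A t \<and> cntle A t \<le> cntle B t + 1))"
proof (induction k)
  case 0
  show ?case
  proof (intro allI impI)
    fix P Q :: "real poly" and n :: nat
    assume P: "degree P = n" "lead_coeff P = 1" and Q: "degree Q < n \<or> Q = 0"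
      and z: "roots_in (cpoly P Q) {z. Im z = 0} = 0"
    define d where "d = n - 2 * min (roots_in (cpoly P Q) {z. Im z > 0}) (roots_in (cpoly P Q) {z. Im z < 0})"
    have nr: "poly (cpoly P Q) (of_real x) \<noteq> 0" for x
      using no_real_root[OF cpoly_nz[OF P Q] z] .
    obtain x where x: "\<forall>j. Suc j < 2*d - 1 \<longrightarrow> x j < x (Suc j)" "\<forall>i<d. poly P (x (2*i)) = 0"
      "\<forall>i<d-1. poly Q (x (2*i+1)) = 0"
      using core[OF P Q, folded cpoly_def, OF nr] unfolding d_def by blast
    define a where "a = map (\<lambda>i. x (2*i)) [0..<d]"
    define b where "b = map (\<lambda>i. x (2*i+1)) [0..<d-1]"
    have mono: "x i < x j" if "i < j" "j < 2*d - 1" for i j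
      using strict_chain[OF x(1) that] .
    have dA: "prod_mset (image_mset (\<lambda>r. [:-r, 1:]) (mset a)) dvd P"
      unfolding a_def prod_lin_map_upt
    proof (rule distinct_roots_dvd)
      show "poly P (x (2*i)) = 0" if "i < d" for i using x(2) that by blast
      show "inj_on (\<lambda>i. x (2 * i)) {..<d}"
      proof (rule inj_onI)
        fix i j assume "i \<in> {..<d}" "j \<in> {..<d}" "x (2*i) = x (2*j)"
        moreover have "2*i < 2*d - 1" "2*j < 2*d - 1" using calculation by auto
        ultimately show "i = j" using mono[of "2*i" "2*j"] mono[of "2*j" "2*i"]
          by (cases i j rule: linorder_cases) auto
      qed
    qed
    have dB: "prod_mset (image_mset (\<lambda>r. [:-r, 1:]) (mset b)) dvd Q"
      unfolding b_def prod_lin_map_upt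
    proof (rule distinct_roots_dvd)
      show "poly Q (x (2*i+1)) = 0" if "i < d - 1" for i using x(3) that by blast
      show "inj_on (\<lambda>i. x (2 * i + 1)) {..<d-1}"
      proof (rule inj_onI)
        fix i j assume "i \<in> {..<d-1}" "j \<in> {..<d-1}" "x (2*i+1) = x (2*j+1)"
        moreover have "2*i+1 < 2*d - 1" "2*j+1 < 2*d - 1" using calculation by auto
        ultimately show "i = j" using mono[of "2*i+1" "2*j+1"] mono[of "2*j+1" "2*i+1"]
          by (cases i j rule: linorder_cases) auto
      qed
    qed
    have C: "cntle (mset b) t \<le> cntle (mset a) t \<and> cntle (mset a) t \<le> cntle (mset b) t + 1" for t
    proof (cases "d = 0")
      case True then show ?thesis by (simp add: a_def b_def cntle_def)
    next
      case False
      show ?thesis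
      proof (rule interlace_to_C)
        show "sorted a" unfolding sorted_iff_nth_mono
        proof (intro allI impI)
          fix i j assume "i \<le> j" "j < length a"
          moreover have "j < d" using calculation by (simp add: a_def)
          moreover have "2*j < 2*d - 1" using calculation by linarith
          ultimately show "a ! i \<le> a ! j" using mono[of "2*i" "2*j"] by (cases "i = j") (auto simp: a_def)
        qed
        show "sorted b" unfolding sorted_iff_nth_mono
        proof (intro allI impI)
          fix i j assume "i \<le> j" "j < length b"
          moreover have "j < d - 1" using calculation by (simp add: b_def)
          moreover have "2*j+1 < 2*d - 1" using calculation by linarith
          ultimately show "b ! i \<le> b ! j" using mono[of "2*i+1" "2*j+1"] by (cases "i = j") (auto simp: b_def)
        qed
        show "length b + 1 = length a" using False by (simp add: a_def b_def)
        show "a ! i \<le> b ! i \<and> b ! i \<le> a ! Suc i" if "i < length b" for i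
        proof -
          have "i < d - 1" using that by (simp add: b_def)
          then have "2*i+2 < 2*d - 1" by linarith
          then show ?thesis using that mono[of "2*i" "2*i+1"] mono[of "2*i+1" "2*i+2"]
            by (auto simp: a_def b_def nth_append)
        qed
      qed
    qed
    show "\<exists>A B. prod_mset (image_mset (\<lambda>r. [:-r, 1:]) A) dvd P \<and> prod_mset (image_mset (\<lambda>r. [:-r, 1:]) B) dvd Q \<and>
        n - 2 * min (roots_in (cpoly P Q) {z. Im z > 0}) (roots_in (cpoly P Q) {z. Im z < 0}) \<le> size A \<and>
        n - 2 * min (roots_in (cpoly P Q) {z. Im z > 0}) (roots_in (cpoly P Q) {z. Im z < 0}) - 1 \<le> size B \<and>
        (\<forall>t. cntle B t \<le> cntle A t \<and> cntle A t \<le> cntle B t + 1)"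
      apply (rule exI[of _ "mset a"], rule exI[of _ "mset b"])
      using dA dB C by (simp add: a_def b_def flip: d_def)
  qed
next
  case (Suc k)
  show ?case
  proof (intro allI impI)
    fix P Q :: "real poly" and n :: nat
    assume P: "degree P = n" "lead_coeff P = 1" and Q: "degree Q < n \<or> Q = 0"
      and z: "roots_in (cpoly P Q) {z. Im z = 0} = Suc k"
    have nz: "cpoly P Q \<noteq> 0" using cpoly_nz[OF P Q] .
    have "size (filter_mset (\<lambda>z. z \<in> {z. Im z = 0}) (proots (cpoly P Q))) \<noteq> 0"
      using z roots_in_size[OF nz] by simp
    then obtain z where zin: "z \<in># filter_mset (\<lambda>z. z \<in> {z. Im z = 0}) (proots (cpoly P Q))"
      by (metis multiset_nonemptyE size_empty)
    define r where "r = Re z"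
    have zr: "z = of_real r" using zin by (simp add: r_def complex_eq_iff)
    have "poly (cpoly P Q) (of_real r) = 0" using zin nz zr by simp
    then have "of_real (poly P r) + \<i> * of_real (poly Q r) = (0::complex)" by (simp add: poly_cpoly)
    then have "poly P r = 0 \<and> poly Q r = 0" by (simp add: complex_eq_iff)
    then have pr: "poly P r = 0" "poly Q r = 0" by auto
    obtain P1 where P1: "P = [:-r, 1:] * P1" using pr(1) by (auto simp: poly_eq_0_iff_dvd elim: dvdE)
    obtain Q1 where Q1: "Q = [:-r, 1:] * Q1" using pr(2) by (auto simp: poly_eq_0_iff_dvd elim: dvdE)
    have P1nz: "P1 \<noteq> 0" using P P1 by auto
    have e1: "degree P = degree [:-r, 1:] + degree P1"
      unfolding P1 by (rule degree_mult_eq) (use P1nz in auto)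
    have degP: "degree P = degree P1 + 1" using e1 by simp
    have e2: "lead_coeff P = lead_coeff [:-r, 1:] * lead_coeff P1"
      unfolding P1 by (rule lead_coeff_mult)
    have P1': "degree P1 = n - 1" "lead_coeff P1 = 1"
      using degP P apply simp using e2 P by simp
    have Q1': "degree Q1 < n - 1 \<or> Q1 = 0"
    proof (cases "Q1 = 0")
      case False
      have "degree Q = degree [:-r, 1:] + degree Q1"
        unfolding Q1 by (rule degree_mult_eq) (use False in auto)
      then have "degree Q = degree Q1 + 1" by simp
      moreover have "Q \<noteq> 0" using calculation by auto
      ultimately show ?thesis using Q by auto
    qed simp
    have ml: "map_poly complex_of_real [:-r, 1:] = [:- of_real r, 1:]" by (simp add: map_poly_pCons)
    have cpe: "cpoly P Q = [:- of_real r, 1:] * cpoly P1 Q1"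
      unfolding cpoly_def P1 Q1 map_of_real_mult ml by (simp only: distrib_left mult_smult_right)
    have nz1: "cpoly P1 Q1 \<noteq> 0" using cpoly_nz[OF P1' Q1'] .
    have pr_e: "proots (cpoly P Q) = add_mset (of_real r) (proots (cpoly P1 Q1))"
      unfolding cpe by (subst proots_mult) (use nz1 in auto)
    have ri: "roots_in (cpoly P Q) S = (if of_real r \<in> S then 1 else 0) + roots_in (cpoly P1 Q1) S" for S
      using roots_in_size[OF nz, of S] roots_in_size[OF nz1, of S] pr_e by simp
    have np: "roots_in (cpoly P Q) {z. Im z > 0} = roots_in (cpoly P1 Q1) {z. Im z > 0}"
      and nm: "roots_in (cpoly P Q) {z. Im z < 0} = roots_in (cpoly P1 Q1) {z. Im z < 0}"
      and n0: "roots_in (cpoly P1 Q1) {z. Im z = 0} = k"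
      using ri[of "{z. Im z > 0}"] ri[of "{z. Im z < 0}"] ri[of "{z. Im z = 0}"] z by auto
    have tot: "roots_in (cpoly P Q) {z. Im z > 0} + roots_in (cpoly P Q) {z. Im z < 0} + Suc k \<le> n"
    proof -
      have "roots_in (cpoly P Q) {z. Im z > 0} + roots_in (cpoly P Q) {z. Im z < 0} + roots_in (cpoly P Q) {z. Im z = 0}
          \<le> size (proots (cpoly P Q))"
      proof -
        let ?M = "proots (cpoly P Q)"
        have "filter_mset (\<lambda>z. z \<in> {z. Im z > 0}) ?M + filter_mset (\<lambda>z. z \<in> {z. Im z < 0}) ?M
            + filter_mset (\<lambda>z. z \<in> {z. Im z = 0}) ?M \<subseteq># ?M"
          by (rule mset_subset_eqI) auto
        from size_mset_mono[OF this] show ?thesis using roots_in_size[OF nz] by simp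
      qed
      also have "\<dots> \<le> degree (cpoly P Q)" by (simp add: size_proots_complex)
      also have "degree (cpoly P Q) \<le> n"
        by (rule degree_le) (use P Q in \<open>auto simp: cpoly_def coeff_map_poly coeff_eq_0\<close>)
      finally show ?thesis using z by simp
    qed
    from Suc.IH[rule_format, OF P1' Q1' n0] obtain A B where AB:
      "prod_mset (image_mset (\<lambda>r. [:-r, 1:]) A) dvd P1" "prod_mset (image_mset (\<lambda>r. [:-r, 1:]) B) dvd Q1"
      "n - 1 - 2 * min (roots_in (cpoly P1 Q1) {z. Im z > 0}) (roots_in (cpoly P1 Q1) {z. Im z < 0}) \<le> size A"
      "n - 1 - 2 * min (roots_in (cpoly P1 Q1) {z. Im z > 0}) (roots_in (cpoly P1 Q1) {z. Im z < 0}) - 1 \<le> size B"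
      "\<forall>t. cntle B t \<le> cntle A t \<and> cntle A t \<le> cntle B t + 1" by blast
    show "\<exists>A B. prod_mset (image_mset (\<lambda>r. [:-r, 1:]) A) dvd P \<and> prod_mset (image_mset (\<lambda>r. [:-r, 1:]) B) dvd Q \<and>
        n - 2 * min (roots_in (cpoly P Q) {z. Im z > 0}) (roots_in (cpoly P Q) {z. Im z < 0}) \<le> size A \<and>
        n - 2 * min (roots_in (cpoly P Q) {z. Im z > 0}) (roots_in (cpoly P Q) {z. Im z < 0}) - 1 \<le> size B \<and>
        (\<forall>t. cntle B t \<le> cntle A t \<and> cntle A t \<le> cntle B t + 1)"
    proof (intro exI conjI allI)
      have "prod_mset (image_mset (\<lambda>r. [:-r, 1:]) (add_mset r A)) = [:-r, 1:] * prod_mset (image_mset (\<lambda>r. [:-r, 1:]) A)"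
        by (simp only: image_mset_add_mset prod_mset.add_mset)
      then show "prod_mset (image_mset (\<lambda>r. [:-r, 1:]) (add_mset r A)) dvd P"
        unfolding P1 by (simp only: mult_dvd_mono[OF dvd_refl AB(1)])
      have "prod_mset (image_mset (\<lambda>r. [:-r, 1:]) (add_mset r B)) = [:-r, 1:] * prod_mset (image_mset (\<lambda>r. [:-r, 1:]) B)"
        by (simp only: image_mset_add_mset prod_mset.add_mset)
      then show "prod_mset (image_mset (\<lambda>r. [:-r, 1:]) (add_mset r B)) dvd Q"
        unfolding Q1 by (simp only: mult_dvd_mono[OF dvd_refl AB(2)])
      show "n - 2 * min (roots_in (cpoly P Q) {z. Im z > 0}) (roots_in (cpoly P Q) {z. Im z < 0}) \<le> size (add_mset r A)"
        using AB(3) tot unfolding np nm by simp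
      show "n - 2 * min (roots_in (cpoly P Q) {z. Im z > 0}) (roots_in (cpoly P Q) {z. Im z < 0}) - 1 \<le> size (add_mset r B)"
        using AB(4) tot unfolding np nm by simp
      fix t
      show "cntle (add_mset r B) t \<le> cntle (add_mset r A) t"
        using AB(5) by (simp add: cntle_def)
      show "cntle (add_mset r A) t \<le> cntle (add_mset r B) t + 1"
        using AB(5) by (simp add: cntle_def)
    qed
  qed
qed

lemma prod_nth_mset:
  "(\<Prod>i<length xs. [:-(xs!i :: real), 1:]) = prod_mset (image_mset (\<lambda>r. [:-r, 1:]) (mset xs))"
proof -
  have "prod_mset (image_mset (\<lambda>r. [:-r, 1:]) (mset xs)) = prod_list (map (\<lambda>r. [:-r, 1:]) xs)"
    by (simp add: prod_mset_prod_list flip: mset_map)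
  also have "\<dots> = (\<Prod>i\<in>{0..<length xs}. [:-(xs!i), 1:])"
    by (subst prod.list_conv_set_nth) simp
  finally show ?thesis by (simp add: atLeast0LessThan)
qed

lemma strict_prods:
  fixes P Q :: "real poly"
  assumes x: "\<forall>j. Suc j < 2*d - 1 \<longrightarrow> x j < x (Suc j)" "\<forall>i<d. poly P (x (2*i)) = 0"
      "\<forall>i<d-1. poly Q (x (2*i+1)) = 0"
  shows "(\<Prod>i<d. [:- x (2*i), 1:]) dvd P" "(\<Prod>i<d-1. [:- x (2*i+1), 1:]) dvd Q"
    "\<forall>i<d-1. x (2*i) < x (2*i+1) \<and> x (2*i+1) < x (2*Suc i)"
proof -
  have mono: "x i < x j" if "i < j" "j < 2*d - 1" for i j
    using strict_chain[OF x(1) that] .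
  show "(\<Prod>i<d. [:- x (2*i), 1:]) dvd P"
  proof (rule distinct_roots_dvd)
    show "poly P (x (2*i)) = 0" if "i < d" for i using x(2) that by blast
    show "inj_on (\<lambda>i. x (2 * i)) {..<d}"
    proof (rule inj_onI)
      fix i j assume "i \<in> {..<d}" "j \<in> {..<d}" "x (2*i) = x (2*j)"
      moreover have "2*i < 2*d - 1" "2*j < 2*d - 1" using calculation by auto
      ultimately show "i = j" using mono[of "2*i" "2*j"] mono[of "2*j" "2*i"]
        by (cases i j rule: linorder_cases) auto
    qed
  qed
  show "(\<Prod>i<d-1. [:- x (2*i+1), 1:]) dvd Q"
  proof (rule distinct_roots_dvd)
    show "poly Q (x (2*i+1)) = 0" if "i < d - 1" for i using x(3) that by blast
    show "inj_on (\<lambda>i. x (2 * i + 1)) {..<d-1}"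
    proof (rule inj_onI)
      fix i j assume "i \<in> {..<d-1}" "j \<in> {..<d-1}" "x (2*i+1) = x (2*j+1)"
      moreover have "2*i+1 < 2*d - 1" "2*j+1 < 2*d - 1" using calculation by auto
      ultimately show "i = j" using mono[of "2*i+1" "2*j+1"] mono[of "2*j+1" "2*i+1"]
        by (cases i j rule: linorder_cases) auto
    qed
  qed
  show "\<forall>i<d-1. x (2*i) < x (2*i+1) \<and> x (2*i+1) < x (2*Suc i)"
  proof (intro allI impI)
    fix i assume "i < d - 1"
    then have "2*i+2 < 2*d - 1" by linarith
    then show "x (2*i) < x (2*i+1) \<and> x (2*i+1) < x (2*Suc i)"
      using mono[of "2*i" "2*i+1"] mono[of "2*i+1" "2*i+2"] by simp
  qed
qed

theorem theorem3p2:
  fixes P Q :: "real poly" and n :: nat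
  assumes n: "n \<ge> 1"
    and P: "degree P = n" "lead_coeff P = 1"
    and Q: "degree Q < n"
  defines "f \<equiv> map_poly complex_of_real P + smult \<i> (map_poly complex_of_real Q)"
  defines "np \<equiv> roots_in f {z. Im z > 0}"
    and "nm \<equiv> roots_in f {z. Im z < 0}"
    and "n0 \<equiv> roots_in f {z. Im z = 0}"
  defines "d \<equiv> n - 2 * min np nm"
  assumes "n0 < n"
  shows "(\<exists>\<mu> \<nu> :: nat \<Rightarrow> real.
            (\<Prod>i<d. [:- \<mu> i, 1:]) dvd P \<and> (\<Prod>i<d - 1. [:- \<nu> i, 1:]) dvd Q \<and>
            (\<forall>i < d - 1. \<mu> i \<le> \<nu> i \<and> \<nu> i \<le> \<mu> (Suc i)))
       \<and> (n0 = 0 \<longrightarrow>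
          (\<exists>\<mu> \<nu> :: nat \<Rightarrow> real.
            (\<Prod>i<d. [:- \<mu> i, 1:]) dvd P \<and> (\<Prod>i<d - 1. [:- \<nu> i, 1:]) dvd Q \<and>
            (\<forall>i < d - 1. \<mu> i < \<nu> i \<and> \<nu> i < \<mu> (Suc i))))"
proof
  have fc: "f = cpoly P Q" by (simp add: f_def cpoly_def)
  have QQ: "degree Q < n \<or> Q = 0" using Q by simp
  obtain A B where AB:
    "prod_mset (image_mset (\<lambda>r. [:-r, 1:]) A) dvd P" "prod_mset (image_mset (\<lambda>r. [:-r, 1:]) B) dvd Q"
    "d \<le> size A" "d - 1 \<le> size B" "\<forall>t. cntle B t \<le> cntle A t \<and> cntle A t \<le> cntle B t + 1"
    using general[of n0, rule_format, OF P(1) P(2) QQ] unfolding fc d_def np_def nm_def n0_def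
    by blast
  define a where "a = sorted_list_of_multiset A"
  define b where "b = sorted_list_of_multiset B"
  have ma: "mset a = A" and mb: "mset b = B" by (simp_all add: a_def b_def)
  have sa: "sorted a" and sb: "sorted b" by (simp_all add: a_def b_def)
  have la: "d \<le> length a" and lb: "d - 1 \<le> length b" using AB(3,4) ma mb by auto
  show "\<exists>\<mu> \<nu> :: nat \<Rightarrow> real.
            (\<Prod>i<d. [:- \<mu> i, 1:]) dvd P \<and> (\<Prod>i<d - 1. [:- \<nu> i, 1:]) dvd Q \<and>
            (\<forall>i < d - 1. \<mu> i \<le> \<nu> i \<and> \<nu> i \<le> \<mu> (Suc i))"
  proof (intro exI conjI allI impI)
    have "(\<Prod>i<d. [:- a!i, 1:]) dvd (\<Prod>i<length a. [:- a!i, 1:])"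
      using la by (intro prod_dvd_prod_subset) auto
    also have "\<dots> dvd P" unfolding prod_nth_mset ma by (rule AB(1))
    finally show "(\<Prod>i<d. [:- a!i, 1:]) dvd P" .
    have "(\<Prod>i<d-1. [:- b!i, 1:]) dvd (\<Prod>i<length b. [:- b!i, 1:])"
      using lb by (intro prod_dvd_prod_subset) auto
    also have "\<dots> dvd Q" unfolding prod_nth_mset mb by (rule AB(2))
    finally show "(\<Prod>i<d-1. [:- b!i, 1:]) dvd Q" .
    fix i assume i: "i < d - 1"
    have C: "cntle (mset b) t \<le> cntle (mset a) t \<and> cntle (mset a) t \<le> cntle (mset b) t + 1" for t
      using AB(5) ma mb by simp
    show "a ! i \<le> b ! i" "b ! i \<le> a ! Suc i" using C_to_interlace[OF sa sb C la lb i] by auto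
  qed
  show "n0 = 0 \<longrightarrow>
          (\<exists>\<mu> \<nu> :: nat \<Rightarrow> real.
            (\<Prod>i<d. [:- \<mu> i, 1:]) dvd P \<and> (\<Prod>i<d - 1. [:- \<nu> i, 1:]) dvd Q \<and>
            (\<forall>i < d - 1. \<mu> i < \<nu> i \<and> \<nu> i < \<mu> (Suc i)))"
  proof
    assume z: "n0 = 0"
    have nr: "poly f (of_real x) \<noteq> 0" for x
      using no_real_root[OF cpoly_nz[OF P QQ]] z unfolding n0_def fc by blast
    obtain x where x: "\<forall>j. Suc j < 2*d - 1 \<longrightarrow> x j < x (Suc j)" "\<forall>i<d. poly P (x (2*i)) = 0"
      "\<forall>i<d-1. poly Q (x (2*i+1)) = 0"
      using core[OF P QQ, folded f_def, OF nr] unfolding d_def np_def nm_def by blast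
    note S = strict_prods[OF x]
    show "\<exists>\<mu> \<nu> :: nat \<Rightarrow> real.
            (\<Prod>i<d. [:- \<mu> i, 1:]) dvd P \<and> (\<Prod>i<d - 1. [:- \<nu> i, 1:]) dvd Q \<and>
            (\<forall>i < d - 1. \<mu> i < \<nu> i \<and> \<nu> i < \<mu> (Suc i))"
      by (rule exI[of _ "\<lambda>i. x (2*i)"], rule exI[of _ "\<lambda>i. x (2*i+1)"]) (use S in blast)
  qed
qed

end
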